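(* Let $((G,k,d),X,\langle X_L,X_R\rangle)$ be an instance of \textsc{Annotated Contraction(vc)} such that $X_R$ is an independent set of $G$ and every edge of $G[X]$ has both endpoints in $X_L\cup X_R$. Let $F_1=E(X_L,X_R)$ be the set of edges with one endpoint in $X_L$ and the other in $X_R$, and let $F_2$ be the edge set of a spanning forest of $G[X_L]$. Let $G'=(G-F_1)/F_2$, $k'=k-|F_2|$, $d'=d-|F_2|$, let $X'$ be the image of $X$ in $G'$ (i.e. $V(G[X]/F_2)$) and $X'_L$ the image of $X_L$ in $G'$ (i.e. $V(G[X_L]/F_2)$). Then $((G,k,d),X,\langle X_L,X_R\rangle)$ is a Yes-instance if and only if $((G',k',d'),X',\langle X'_L,X_R\rangle)$ is a Yes-instance; moreover $X'$ is an independent set of $G'$.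
   Context: All graphs are finite, simple and undirected. $G-F$ denotes deletion of the edge set $F$; $G/F$ denotes contraction of all edges of $F$ (contracting $uv$ deletes $u,v$ and adds a new vertex adjacent to $(N(u)\cup N(v))\setminus\{u,v\}$, without loops or parallel edges). $\mathrm{rank}(H)$ is $|V(H)|$ minus the number of connected components of $H$, and $\mathrm{rank}(S):=\mathrm{rank}(G[S])$ for $S\subseteq V(G)$. An instance of \textsc{Annotated Contraction(vc)} consists of a graph $G$, integers $k,d$, a vertex cover $X$ of $G$ (in the paper, a minimum vertex cover), and disjoint subsets $X_L,X_R\subseteq X$; it is a Yes-instance iff there exist $X_s\subseteq X$ and $Y_s\subseteq V(G)\setminus X$ with (i) $(X\setminus X_s)\cup Y_s$ is a vertex cover of $G$, (ii) $\mathrm{rank}((X\setminus X_s)\cup Y_s)\ge k$, (iii) $|Y_s|-|X_s|\le k-d$, and (iv) $X_L\cap X_s=\emptyset$ and $X_R\subseteq X_s$. *)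

theory Defs
  imports Main
begin

definition simple_graph :: "'a set \<Rightarrow> 'a set set \<Rightarrow> bool" where
  "simple_graph V E \<longleftrightarrow> finite V \<and> (\<forall>e\<in>E. e \<subseteq> V \<and> card e = 2)"

definition vertex_cover :: "'a set \<Rightarrow> 'a set set \<Rightarrow> 'a set \<Rightarrow> bool" where
  "vertex_cover V E S \<longleftrightarrow> S \<subseteq> V \<and> (\<forall>e\<in>E. e \<inter> S \<noteq> {})"

definition independent_set :: "'a set set \<Rightarrow> 'a set \<Rightarrow> bool" where
  "independent_set E S \<longleftrightarrow> (\<forall>e\<in>E. \<not> e \<subseteq> S)"

definition induced_edges :: "'a set set \<Rightarrow> 'a set \<Rightarrow> 'a set set" where
  "induced_edges E S = {e\<in>E. e \<subseteq> S}"

definition edges_between :: "'a set set \<Rightarrow> 'a set \<Rightarrow> 'a set \<Rightarrow> 'a set set" where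
  "edges_between E A B = {e\<in>E. \<exists>u\<in>A. \<exists>v\<in>B. e = {u, v}}"

definition reach :: "'a set \<Rightarrow> 'a set set \<Rightarrow> ('a \<times> 'a) set" where
  "reach V E = ({(x, y). {x, y} \<in> E \<and> x \<in> V \<and> y \<in> V}\<^sup>*) \<inter> (V \<times> V)"

definition components :: "'a set \<Rightarrow> 'a set set \<Rightarrow> 'a set set" where
  "components V E = V // reach V E"

definition graph_rank :: "'a set \<Rightarrow> 'a set set \<Rightarrow> int" where
  "graph_rank V E = int (card V) - int (card (components V E))"

definition set_rank :: "'a set set \<Rightarrow> 'a set \<Rightarrow> int" where
  "set_rank E S = graph_rank S (induced_edges E S)"

definition has_cycle :: "'a set set \<Rightarrow> bool" where
  "has_cycle F \<longleftrightarrow> (\<exists>vs. distinct vs \<and> length vs \<ge> 3 \<and>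
      (\<forall>i<length vs. {vs ! i, vs ! ((i + 1) mod length vs)} \<in> F))"

definition spanning_forest :: "'a set \<Rightarrow> 'a set set \<Rightarrow> 'a set set \<Rightarrow> bool" where
  "spanning_forest V E F \<longleftrightarrow> F \<subseteq> E \<and> \<not> has_cycle F \<and> reach V F = reach V E"

text \<open>Contraction (V,E)/F of all edges in F: the vertices of the contracted graph are
the connected components of (V,F) (a vertex not incident to F becomes the singleton
class); two distinct classes are adjacent iff some edge of E joins them.  Loops and
parallel edges are discarded.\<close>
definition contract :: "'a set \<Rightarrow> 'a set set \<Rightarrow> 'a set set \<Rightarrow> 'a set set \<times> 'a set set set" where
  "contract V E F = (V // reach V F,
     {{C, D} | C D. C \<in> V // reach V F \<and> D \<in> V // reach V F \<and> C \<noteq> D \<and>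
                     (\<exists>u\<in>C. \<exists>v\<in>D. {u, v} \<in> E)})"

definition contract_img :: "'a set \<Rightarrow> 'a set set \<Rightarrow> 'a \<Rightarrow> 'a set" where
  "contract_img V F v = reach V F `` {v}"

definition annotated_yes ::
  "'a set \<Rightarrow> 'a set set \<Rightarrow> int \<Rightarrow> int \<Rightarrow> 'a set \<Rightarrow> 'a set \<Rightarrow> 'a set \<Rightarrow> bool" where
  "annotated_yes V E k d X XL XR \<longleftrightarrow>
     (\<exists>Xs Ys. Xs \<subseteq> X \<and> Ys \<subseteq> V - X \<and>
        vertex_cover V E ((X - Xs) \<union> Ys) \<and>
        set_rank E ((X - Xs) \<union> Ys) \<ge> k \<and>
        int (card Ys) - int (card Xs) \<le> k - d \<and>
        XL \<inter> Xs = {} \<and> XR \<subseteq> Xs)"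

end

theory Submission
  imports Defs "HOL-Library.Transitive_Closure_Table"
begin


definition rel :: "'a set set \<Rightarrow> ('a \<times> 'a) set" where
  "rel F = {(x,y). {x,y} \<in> F}"

lemma sym_rel: "sym (rel F)"
  unfolding rel_def sym_def by (auto simp: insert_commute)

lemma equiv_rel: "equiv UNIV ((rel F)\<^sup>*)"
  by (simp add: equiv_def refl_rtrancl trans_rtrancl sym_rtrancl sym_rel)

lemma rel_sub: "\<Union>F \<subseteq> A \<Longrightarrow> rel F \<subseteq> A \<times> A"
  unfolding rel_def by auto

lemma rtr_mem: "(x,y) \<in> (rel F)\<^sup>* \<Longrightarrow> x = y \<or> (x \<in> \<Union>F \<and> y \<in> \<Union>F)"
  by (induction rule: rtrancl_induct) (auto simp: rel_def)

lemma reach_eq: "\<Union>F \<subseteq> V \<Longrightarrow> reach V F = (rel F)\<^sup>* \<inter> (V \<times> V)"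
proof -
  assume a: "\<Union>F \<subseteq> V"
  have "{(x, y). {x, y} \<in> F \<and> x \<in> V \<and> y \<in> V} = rel F"
    using a unfolding rel_def by auto
  thus ?thesis unfolding reach_def by simp
qed

lemma reach_img: "\<Union>F \<subseteq> V \<Longrightarrow> v \<in> V \<Longrightarrow> reach V F `` {v} = (rel F)\<^sup>* `` {v}"
  using rtr_mem[of v _ F] by (auto simp: reach_eq) blast

lemma reach_quot: "\<Union>F \<subseteq> V \<Longrightarrow> V // reach V F = (\<lambda>v. (rel F)\<^sup>* `` {v}) ` V"
  unfolding quotient_def using reach_img[of F V] by auto

lemma equiv_reach: "equiv V (reach V E)"
  unfolding reach_def equiv_def refl_on_def sym_def trans_def
  apply (intro conjI)
  apply auto[1]
  apply auto[1]
   apply clarsimp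
  subgoal for x y
  proof -
    have s: "sym {(x, y). {x, y} \<in> E \<and> x \<in> V \<and> y \<in> V}" unfolding sym_def by (auto simp: insert_commute)
    assume "(x,y) \<in> {(x, y). {x, y} \<in> E \<and> x \<in> V \<and> y \<in> V}\<^sup>*"
    thus ?thesis using sym_rtrancl[OF s] unfolding sym_def by blast
  qed
  apply clarsimp
  by (meson rtrancl_trans)

lemma has_cycle_mono: "has_cycle F \<Longrightarrow> F \<subseteq> F' \<Longrightarrow> has_cycle F'"
  unfolding has_cycle_def by blast

lemma cycle_from_path:
  assumes "(u,v) \<in> (rel F)\<^sup>*" "u \<noteq> v" "{u,v} \<notin> F"
  shows "has_cycle (insert {u,v} F)"
proof -
  have "(\<lambda>a b. (a,b) \<in> rel F)\<^sup>*\<^sup>* u v" using assms(1) by (simp add: rtranclp_rtrancl_eq)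
  then obtain xs0 where "rtrancl_path (\<lambda>a b. (a,b) \<in> rel F) u xs0 v"
    by (auto simp: rtranclp_eq_rtrancl_path)
  then obtain xs where p: "rtrancl_path (\<lambda>a b. (a,b) \<in> rel F) u xs v" and d: "distinct (u # xs)"
    using rtrancl_path_distinct by metis
  have ne: "xs \<noteq> []" using p assms(2) by (auto elim: rtrancl_path.cases)
  have la: "last xs = v" using rtrancl_path_last[OF p ne] .
  have "length xs \<noteq> 1"
  proof
    assume "length xs = 1"
    then obtain w where "xs = [w]" by (cases xs) auto
    with la have "xs = [v]" by simp
    with rtrancl_path_nth[OF p, of 0] have "(u,v) \<in> rel F" by simp
    thus False using assms(3) by (simp add: rel_def)
  qed
  with ne have len: "length (u # xs) \<ge> 3" by (cases xs) (auto simp: Suc_le_eq)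
  show ?thesis unfolding has_cycle_def
  proof (intro exI[of _ "u # xs"] conjI d len allI impI)
    fix i assume i: "i < length (u # xs)"
    show "{(u # xs) ! i, (u # xs) ! ((i + 1) mod length (u # xs))} \<in> insert {u, v} F"
    proof (cases "i < length xs")
      case True
      hence "(i+1) mod length (u#xs) = i + 1" by simp
      with rtrancl_path_nth[OF p True] show ?thesis by (simp add: rel_def)
    next
      case False
      with i have "i = length xs" by simp
      moreover have "(u#xs) ! length xs = v" using la ne by (simp add: last_conv_nth)
      ultimately show ?thesis by (auto simp: insert_commute)
    qed
  qed
qed

lemma rel_insert: "rel (insert {u,v} F) = rel F \<union> {(u,v),(v,u)}"
  unfolding rel_def by (auto simp: doubleton_eq_iff)

lemma merge_rtr:
  assumes "(a,b) \<in> (rel (insert {u,v} F))\<^sup>*"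
  shows "(a,b) \<in> (rel F)\<^sup>* \<or> ((a,u) \<in> (rel F)\<^sup>* \<and> (v,b) \<in> (rel F)\<^sup>*) \<or> ((a,v) \<in> (rel F)\<^sup>* \<and> (u,b) \<in> (rel F)\<^sup>*)"
  using assms
proof (induction rule: rtrancl_induct)
  case base then show ?case by simp
next
  case (step y z)
  have e: "equiv UNIV ((rel F)\<^sup>*)" by (rule equiv_rel)
  have sy: "\<And>p q. (p,q) \<in> (rel F)\<^sup>* \<Longrightarrow> (q,p) \<in> (rel F)\<^sup>*" using e unfolding equiv_def sym_def by blast
  have tr: "\<And>p q r. (p,q) \<in> (rel F)\<^sup>* \<Longrightarrow> (q,r) \<in> (rel F)\<^sup>* \<Longrightarrow> (p,r) \<in> (rel F)\<^sup>*" by (meson rtrancl_trans)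
  from step(2) have "(y,z) \<in> rel F \<or> (y = u \<and> z = v) \<or> (y = v \<and> z = u)" by (auto simp: rel_insert)
  then show ?case
  proof (elim disjE)
    assume "(y,z) \<in> rel F"
    hence yz: "(y,z) \<in> (rel F)\<^sup>*" by simp
    show ?case using step(3) tr[OF _ yz] sy tr by blast
  next
    assume "y = u \<and> z = v"
    thus ?case using step(3) sy tr by blast
  next
    assume "y = v \<and> z = u"
    thus ?case using step(3) sy tr by blast
  qed
qed

lemma merge_cls:
  defines "q \<equiv> \<lambda>G w. (rel G)\<^sup>* `` {w}"
  shows "q (insert {u,v} F) w = (if w \<in> q F u \<union> q F v then q F u \<union> q F v else q F w)"
proof -
  have e: "equiv UNIV ((rel F)\<^sup>*)" by (rule equiv_rel)
  have sy: "\<And>p q. (p,q) \<in> (rel F)\<^sup>* \<Longrightarrow> (q,p) \<in> (rel F)\<^sup>*" using e unfolding equiv_def sym_def by blast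
  have tr: "\<And>p q r. (p,q) \<in> (rel F)\<^sup>* \<Longrightarrow> (q,r) \<in> (rel F)\<^sup>* \<Longrightarrow> (p,r) \<in> (rel F)\<^sup>*" by (meson rtrancl_trans)
  have mono: "(rel F)\<^sup>* \<subseteq> (rel (insert {u,v} F))\<^sup>*"
    by (rule rtrancl_mono) (auto simp: rel_insert)
  have uv: "(u,v) \<in> (rel (insert {u,v} F))\<^sup>*" "(v,u) \<in> (rel (insert {u,v} F))\<^sup>*"
    by (auto simp: rel_insert)
  have tr2: "\<And>p q r. (p,q) \<in> (rel (insert {u,v} F))\<^sup>* \<Longrightarrow> (q,r) \<in> (rel (insert {u,v} F))\<^sup>* \<Longrightarrow> (p,r) \<in> (rel (insert {u,v} F))\<^sup>*" by (meson rtrancl_trans)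
  let ?N = "(rel F)\<^sup>*" and ?M = "(rel (insert {u,v} F))\<^sup>*"
  show ?thesis
  proof (cases "w \<in> ?N `` {u} \<union> ?N `` {v}")
    case True
    hence wM: "(w,u) \<in> ?M" using mono uv tr2 sy by blast
    have "?M `` {w} = ?N `` {u} \<union> ?N `` {v}"
    proof (intro set_eqI iffI)
      fix b assume "b \<in> ?M `` {w}"
      hence "(w,b) \<in> ?M" by simp
      from merge_rtr[OF this] True show "b \<in> ?N `` {u} \<union> ?N `` {v}"
        using sy tr by blast
    next
      fix b assume "b \<in> ?N `` {u} \<union> ?N `` {v}"
      hence "(u,b) \<in> ?M" using mono uv tr2 by blast
      thus "b \<in> ?M `` {w}" using wM tr2 by blast
    qed
    thus ?thesis using True unfolding q_def by simp
  next
    case False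
    have "?M `` {w} = ?N `` {w}"
    proof (intro set_eqI iffI)
      fix b assume "b \<in> ?M `` {w}"
      hence "(w,b) \<in> ?M" by simp
      from merge_rtr[OF this] False show "b \<in> ?N `` {w}"
        using sy by blast
    next
      fix b assume "b \<in> ?N `` {w}"
      thus "b \<in> ?M `` {w}" using mono by blast
    qed
    thus ?thesis using False unfolding q_def by simp
  qed
qed

lemma forest_card:
  assumes A: "finite A" and FA: "F \<subseteq> {e. e \<subseteq> A \<and> card e = 2}" and nc: "\<not> has_cycle F"
  shows "card ((\<lambda>w. (rel F)\<^sup>* `` {w}) ` A) + card F = card A"
proof -
  have "F \<subseteq> Pow A" using FA by auto
  hence fin: "finite F" using A finite_subset by blast
  show ?thesis using fin FA nc
  proof (induction F rule: finite_induct)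
    case empty
    have "(\<lambda>w. (rel {})\<^sup>* `` {w}) ` A = (\<lambda>w. {w}) ` A" by (simp add: rel_def)
    moreover have "card ((\<lambda>w. {w}) ` A) = card A" by (rule card_image) (simp add: inj_on_def)
    ultimately show ?case by simp
  next
    case (insert e F)
    from insert.prems(1) have eA: "e \<subseteq> A" "card e = 2" by auto
    then obtain u v where e: "e = {u,v}" "u \<noteq> v" by (meson card_2_iff)
    have uA: "u \<in> A" "v \<in> A" using eA e by auto
    have ncF: "\<not> has_cycle F" using insert.prems(2) has_cycle_mono[of F "insert e F"] by blast
    have IH: "card ((\<lambda>w. (rel F)\<^sup>* `` {w}) ` A) + card F = card A"
      using insert.IH insert.prems(1) ncF by blast
    have nuv: "(u,v) \<notin> (rel F)\<^sup>*"
      using cycle_from_path[of u v F] e insert.hyps(2) insert.prems(2) by blast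
    define q where "q = (\<lambda>w. (rel F)\<^sup>* `` {w})"
    define U where "U = q u \<union> q v"
    let ?Q = "q ` A" and ?Q' = "(\<lambda>w. (rel (insert e F))\<^sup>* `` {w}) ` A"
    have cl: "\<And>w. (rel (insert e F))\<^sup>* `` {w} = (if w \<in> U then U else q w)"
      unfolding U_def q_def e(1) using merge_cls by metis
    have eqv: "equiv UNIV ((rel F)\<^sup>*)" by (rule equiv_rel)
    have qeq: "\<And>a b. q a = q b \<longleftrightarrow> (a,b) \<in> (rel F)\<^sup>*"
      unfolding q_def using eq_equiv_class_iff[OF eqv] by blast
    have qmem: "\<And>a b. b \<in> q a \<longleftrightarrow> (a,b) \<in> (rel F)\<^sup>*" unfolding q_def by simp
    have quv: "q u \<noteq> q v" using qeq nuv by blast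
    have Q': "?Q' = insert U (?Q - {q u, q v})"
    proof (intro set_eqI iffI)
      fix C assume "C \<in> ?Q'"
      then obtain w where w: "w \<in> A" "C = (rel (insert e F))\<^sup>* `` {w}" by blast
      show "C \<in> insert U (?Q - {q u, q v})"
      proof (cases "w \<in> U")
        case True thus ?thesis using w cl by simp
      next
        case False
        hence "q w \<noteq> q u" "q w \<noteq> q v" unfolding U_def by (metis UnCI qeq qmem)+
        thus ?thesis using w cl False by auto
      qed
    next
      fix C assume "C \<in> insert U (?Q - {q u, q v})"
      then show "C \<in> ?Q'"
      proof
        assume "C = U"
        moreover have "u \<in> U" unfolding U_def q_def by simp
        ultimately show ?thesis using cl uA by (metis image_eqI)
      next
        assume "C \<in> ?Q - {q u, q v}"
        then obtain w where w: "w \<in> A" "C = q w" "q w \<noteq> q u" "q w \<noteq> q v" by auto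
        hence "w \<notin> U" unfolding U_def by (metis Un_iff qeq qmem)
        thus ?thesis using w cl by (metis image_eqI)
      qed
    qed
    have UQ: "U \<notin> ?Q - {q u, q v}"
    proof
      assume "U \<in> ?Q - {q u, q v}"
      then obtain w where w: "U = q w" "q w \<noteq> q u" by auto
      have "u \<in> q w" using w unfolding U_def q_def by auto
      hence "(w,u) \<in> (rel F)\<^sup>*" using qmem by blast
      hence "q w = q u" using qeq by blast
      thus False using w by blast
    qed
    have finQ: "finite ?Q" using A by simp
    have "card ?Q' = card (?Q - {q u, q v}) + 1" using Q' UQ finQ by simp
    also have "card (?Q - {q u, q v}) = card ?Q - 2"
      using finQ quv uA by (simp add: card_Diff_subset)
    finally have "card ?Q' + 1 = card ?Q"
      using quv uA card_mono[OF finQ, of "{q u, q v}"] by auto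
    moreover have "card (insert e F) = card F + 1" using insert.hyps by simp
    ultimately show ?case using IH unfolding q_def by simp
  qed
qed

lemma card_quot_eq:
  assumes qS: "q ` S = S'" and eR: "equiv S R" and eR': "equiv S' R'"
    and iff: "\<And>x y. x \<in> S \<Longrightarrow> y \<in> S \<Longrightarrow> (x,y) \<in> R \<longleftrightarrow> (q x, q y) \<in> R'"
  shows "card (S // R) = card (S' // R')"
proof -
  have RS: "R \<subseteq> S \<times> S" using eR unfolding equiv_def refl_on_def by blast
  have R'S: "R' \<subseteq> S' \<times> S'" using eR' unfolding equiv_def refl_on_def by blast
  have refl': "\<And>z. z \<in> S' \<Longrightarrow> (z,z) \<in> R'" using eR' unfolding equiv_def refl_on_def by blast
  have img: "\<And>x. x \<in> S \<Longrightarrow> q ` (R `` {x}) = R' `` {q x}"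
  proof (intro set_eqI iffI)
    fix x z assume x: "x \<in> S" and "z \<in> q ` (R `` {x})"
    then obtain y where "(x,y) \<in> R" "z = q y" by blast
    thus "z \<in> R' `` {q x}" using iff[OF x] RS by blast
  next
    fix x z assume x: "x \<in> S" and "z \<in> R' `` {q x}"
    hence "(q x, z) \<in> R'" by simp
    hence "z \<in> S'" using R'S by blast
    then obtain y where y: "y \<in> S" "z = q y" using qS by blast
    with iff[OF x y(1)] \<open>(q x, z) \<in> R'\<close> show "z \<in> q ` (R `` {x})" by blast
  qed
  have "bij_betw (\<lambda>C. q ` C) (S // R) (S' // R')"
    unfolding bij_betw_def
  proof
    show "inj_on (\<lambda>C. q ` C) (S // R)"
    proof (rule inj_onI)
      fix C D assume "C \<in> S // R" "D \<in> S // R" and eq: "q ` C = q ` D"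
      then obtain x y where xy: "x \<in> S" "y \<in> S" "C = R `` {x}" "D = R `` {y}" by (auto elim!: quotientE)
      have "q x \<in> q ` D" using eq xy img refl' qS by (metis Image_singleton_iff image_eqI)
      then obtain z where z: "(y,z) \<in> R" "q x = q z" using xy by blast
      have zS: "z \<in> S" using z RS by blast
      have "(q x, q z) \<in> R'" using z refl' qS zS by auto
      hence "(x,z) \<in> R" using iff[OF xy(1) zS] by blast
      hence "(x,y) \<in> R" using z eR unfolding equiv_def sym_def trans_def by blast
      thus "C = D" using xy eq_equiv_class_iff[OF eR] by blast
    qed
  next
    show "(\<lambda>C. q ` C) ` (S // R) = S' // R'"
    proof (intro set_eqI iffI)
      fix D assume "D \<in> (\<lambda>C. q ` C) ` (S // R)"
      then obtain x where "x \<in> S" "D = q ` (R `` {x})" by (auto elim!: quotientE)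
      thus "D \<in> S' // R'" using img qS by (auto intro: quotientI)
    next
      fix D assume "D \<in> S' // R'"
      then obtain z where "z \<in> S'" "D = R' `` {z}" by (auto elim!: quotientE)
      then obtain x where "x \<in> S" "z = q x" using qS by blast
      thus "D \<in> (\<lambda>C. q ` C) ` (S // R)" using img \<open>D = R' `` {z}\<close> by (auto intro: quotientI)
    qed
  qed
  thus ?thesis by (rule bij_betw_same_card)
qed



locale L =
  fixes V :: "'a set" and E :: "'a set set"
    and X XL XR :: "'a set" and F1 F2 :: "'a set set"
  assumes sg: "simple_graph V E"
    and vc: "vertex_cover V E X"
    and XLX: "XL \<subseteq> X" and XRX: "XR \<subseteq> X" and disj: "XL \<inter> XR = {}"
    and indep: "independent_set E XR"
    and eX: "\<forall>e\<in>induced_edges E X. e \<subseteq> XL \<union> XR"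
    and F1d: "F1 = edges_between E XL XR"
    and sf: "spanning_forest XL (induced_edges E XL) F2"
begin

definition N where "N = (rel F2)\<^sup>*"
definition c where "c v = N `` {v}"
definition E' where "E' = {{C, D} | C D. C \<in> c ` V \<and> D \<in> c ` V \<and> C \<noteq> D \<and>
                     (\<exists>u\<in>C. \<exists>v\<in>D. {u, v} \<in> E - F1)}"

lemma finV: "finite V" using sg by (simp add: simple_graph_def)
lemma EV: "e \<in> E \<Longrightarrow> e \<subseteq> V \<and> card e = 2" using sg by (simp add: simple_graph_def)
lemma XV: "X \<subseteq> V" using vc by (simp add: vertex_cover_def)
lemma XLV: "XL \<subseteq> V" using XV XLX by blast
lemma F2sub: "F2 \<subseteq> induced_edges E XL" using sf by (simp add: spanning_forest_def)
lemma UF2: "\<Union>F2 \<subseteq> XL" using F2sub by (auto simp: induced_edges_def)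

lemma eqvN: "equiv UNIV N" unfolding N_def by (rule equiv_rel)
lemma c_eq: "c a = c b \<longleftrightarrow> (a,b) \<in> N" unfolding c_def using eq_equiv_class_iff[OF eqvN] by blast
lemma c_mem: "b \<in> c a \<longleftrightarrow> (a,b) \<in> N" unfolding c_def by simp
lemma N_sym: "(a,b) \<in> N \<Longrightarrow> (b,a) \<in> N" using eqvN unfolding equiv_def sym_def by blast
lemma c_self: "a \<in> c a" unfolding c_def N_def by simp
lemma c_mem_eq: "b \<in> c a \<Longrightarrow> c b = c a" using c_eq c_mem N_sym by blast
lemma N_XL: "(a,b) \<in> N \<Longrightarrow> a \<noteq> b \<Longrightarrow> a \<in> XL \<and> b \<in> XL"
  unfolding N_def using rtr_mem[of a b F2] UF2 by blast
lemma c_notXL: "a \<notin> XL \<Longrightarrow> c a = {a}"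
proof -
  assume "a \<notin> XL"
  hence "\<And>b. b \<in> c a \<Longrightarrow> b = a" using N_XL c_mem by blast
  thus ?thesis using c_self by blast
qed
lemma c_in: "c a = c s \<Longrightarrow> s \<in> S \<Longrightarrow> XL \<subseteq> S \<Longrightarrow> a \<in> S"
proof -
  assume "c a = c s" "s \<in> S" "XL \<subseteq> S"
  hence "(a,s) \<in> N" using c_eq by blast
  thus ?thesis using N_XL \<open>s \<in> S\<close> \<open>XL \<subseteq> S\<close> by blast
qed
lemma span: "{a,b} \<in> E \<Longrightarrow> a \<in> XL \<Longrightarrow> b \<in> XL \<Longrightarrow> (a,b) \<in> N"
proof -
  assume "{a,b} \<in> E" "a \<in> XL" "b \<in> XL"
  hence "(a,b) \<in> reach XL (induced_edges E XL)" unfolding reach_def induced_edges_def by auto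
  hence "(a,b) \<in> reach XL F2" using sf by (simp add: spanning_forest_def)
  moreover have "reach XL F2 \<subseteq> N" unfolding reach_def N_def
    by (rule order_trans[OF Int_lower1], rule rtrancl_mono) (auto simp: rel_def)
  ultimately show ?thesis by blast
qed

lemma E'_E: assumes "e \<in> E'"
  obtains C D u v where "e = {C,D}" "C \<in> c ` V" "D \<in> c ` V" "C \<noteq> D" "u \<in> C" "v \<in> D" "{u,v} \<in> E" "{u,v} \<notin> F1"
  using assms unfolding E'_def by blast

lemma E'_I: "a \<in> V \<Longrightarrow> b \<in> V \<Longrightarrow> c a \<noteq> c b \<Longrightarrow> {a,b} \<in> E \<Longrightarrow> {a,b} \<notin> F1 \<Longrightarrow> {c a, c b} \<in> E'"
  unfolding E'_def
  apply (rule CollectI)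
  apply (rule exI[of _ "c a"])
  apply (rule exI[of _ "c b"])
  using c_self by blast

lemma F1_L: "{a,b} \<in> F1 \<Longrightarrow> a \<in> XL \<or> b \<in> XL"
  using F1d unfolding edges_between_def by (auto simp: doubleton_eq_iff)
lemma F1_R: "{a,b} \<in> F1 \<Longrightarrow> a \<in> XR \<or> b \<in> XR"
  using F1d unfolding edges_between_def by (auto simp: doubleton_eq_iff)
lemma F1_I: "{a,b} \<in> E \<Longrightarrow> a \<in> XL \<Longrightarrow> b \<in> XR \<Longrightarrow> {a,b} \<in> F1"
  using F1d unfolding edges_between_def by blast

lemma V'_eq: "fst (contract V (E - F1) F2) = c ` V"
  unfolding contract_def c_def N_def using reach_quot[OF order_trans[OF UF2 XLV]] by simp
lemma E'_eq: "snd (contract V (E - F1) F2) = E'"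
  unfolding contract_def E'_def using reach_quot[OF order_trans[OF UF2 XLV]] by (simp add: c_def N_def)
lemma X'_eq: "fst (contract X (induced_edges E X) F2) = c ` X"
  unfolding contract_def c_def N_def using reach_quot[OF order_trans[OF UF2 XLX]] by simp
lemma XL'_eq: "fst (contract XL (induced_edges E XL) F2) = c ` XL"
  unfolding contract_def c_def N_def using reach_quot[OF UF2] by simp
lemma XR'_eq: "contract_img V F2 ` XR = c ` XR"
  unfolding contract_img_def c_def N_def using reach_img[OF order_trans[OF UF2 XLV]] XRX XV by auto

lemma card_cXL: "card (c ` XL) + card F2 = card XL"
proof -
  have "F2 \<subseteq> {e. e \<subseteq> XL \<and> card e = 2}" using F2sub EV by (auto simp: induced_edges_def)
  moreover have "\<not> has_cycle F2" using sf by (simp add: spanning_forest_def)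
  moreover have "finite XL" using finV XLV finite_subset by blast
  ultimately show ?thesis using forest_card[of XL F2] unfolding c_def N_def by blast
qed

lemma indep': "independent_set E' (c ` X)"
  unfolding independent_set_def
proof
  fix e assume "e \<in> E'"
  then obtain C D u v where e: "e = {C,D}" "C \<in> c ` V" "D \<in> c ` V" "C \<noteq> D" "u \<in> C" "v \<in> D"
     "{u,v} \<in> E" "{u,v} \<notin> F1" by (rule E'_E)
  show "\<not> e \<subseteq> c ` X"
  proof
    assume sub: "e \<subseteq> c ` X"
    have "C \<in> c ` X" "D \<in> c ` X" using sub e(1) by auto
    then obtain x y where xy: "x \<in> X" "y \<in> X" "C = c x" "D = c y" by blast
    have cu: "c u = C" "c v = D" using e(5,6) xy(3,4) c_mem_eq by blast+
    have uX: "u \<in> X" "v \<in> X" using c_in[of u x X] c_in[of v y X] cu xy XLX by simp_all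
    hence "{u,v} \<in> induced_edges E X" using e by (simp add: induced_edges_def)
    hence uv: "u \<in> XL \<union> XR" "v \<in> XL \<union> XR" using eX by auto
    show False
    proof (cases "u \<in> XL")
      case uL: True
      show False
      proof (cases "v \<in> XL")
        case True
        hence "c u = c v" using span[of u v] e(7) uL c_eq by blast
        thus False using cu e(4) by simp
      next
        case False
        hence "v \<in> XR" using uv by blast
        hence "{u,v} \<in> F1" using F1_I e(7) uL by blast
        thus False using e(8) by blast
      qed
    next
      case uR: False
      hence uR: "u \<in> XR" using uv by blast
      show False
      proof (cases "v \<in> XL")
        case True
        moreover have "{v,u} \<in> E" using e(7) by (simp add: insert_commute)
        ultimately have "{v,u} \<in> F1" using F1_I uR by blast
        thus False using e(8) by (simp add: insert_commute)
      next
        case False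
        hence "v \<in> XR" using uv by blast
        thus False using indep uR e(7) by (auto simp: independent_set_def)
      qed
    qed
  qed
qed

end



context L begin

lemma cls_mem: "C \<in> c ` V \<Longrightarrow> u \<in> C \<Longrightarrow> c u = C"
  using c_mem_eq by blast

lemma vc_iff:
  assumes SV: "S \<subseteq> V" and XLS: "XL \<subseteq> S"
  shows "vertex_cover V E S \<longleftrightarrow> vertex_cover (c ` V) E' (c ` S)"
proof
  assume a: "vertex_cover V E S"
  show "vertex_cover (c ` V) E' (c ` S)"
    unfolding vertex_cover_def
  proof (intro conjI ballI)
    show "c ` S \<subseteq> c ` V" using SV by blast
  next
    fix e assume "e \<in> E'"
    then obtain C D u v where e: "e = {C,D}" "u \<in> C" "v \<in> D" "{u,v} \<in> E" "C \<in> c ` V" "D \<in> c ` V"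
      by (rule E'_E)
    have cov: "\<forall>e\<in>E. e \<inter> S \<noteq> {}" using a by (simp add: vertex_cover_def)
    have "{u,v} \<inter> S \<noteq> {}" using cov e(4) by (rule bspec)
    hence "u \<in> S \<or> v \<in> S" by auto
    moreover have "c u = C" by (rule cls_mem[OF e(5) e(2)])
    moreover have "c v = D" by (rule cls_mem[OF e(6) e(3)])
    ultimately have "C \<in> c ` S \<or> D \<in> c ` S" by (metis image_eqI)
    thus "e \<inter> c ` S \<noteq> {}" using e(1) by blast
  qed
next
  assume a: "vertex_cover (c ` V) E' (c ` S)"
  show "vertex_cover V E S"
    unfolding vertex_cover_def
  proof (intro conjI ballI SV)
    fix e assume eE: "e \<in> E"
    then obtain a b where ab: "e = {a,b}" "a \<noteq> b" using EV[OF eE] unfolding card_2_iff by blast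
    have abV: "a \<in> V" "b \<in> V" using EV eE ab by auto
    show "e \<inter> S \<noteq> {}"
    proof (cases "e \<in> F1")
      case True
      hence "a \<in> XL \<or> b \<in> XL" using F1_L ab by blast
      thus ?thesis using XLS ab by blast
    next
      case nF1: False
      show ?thesis
      proof (cases "c a = c b")
        case True
        hence "a \<in> XL" using c_eq N_XL ab by blast
        thus ?thesis using XLS ab by blast
      next
        case False
        hence "{c a, c b} \<in> E'" using E'_I abV nF1 ab eE by blast
        moreover have "\<forall>e\<in>E'. e \<inter> c ` S \<noteq> {}" using a by (simp add: vertex_cover_def)
        ultimately have "{c a, c b} \<inter> c ` S \<noteq> {}" by blast
        then obtain s where s: "s \<in> S" "c a = c s \<or> c b = c s" by blast
        hence "a \<in> S \<or> b \<in> S" using c_in[of a s S] c_in[of b s S] XLS by blast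
        thus ?thesis using ab by blast
      qed
    qed
  qed
qed


lemma c_inj: "inj_on c (V - XL)"
  by (rule inj_onI) (metis c_eq N_XL Diff_iff)

lemma card_cS:
  assumes XLS: "XL \<subseteq> S" and SV: "S \<subseteq> V"
  shows "card (c ` S) + card F2 = card S"
proof -
  have finS: "finite S" using finV SV finite_subset by blast
  have Sdec: "S = XL \<union> (S - XL)" using XLS by blast
  have img: "c ` S = c ` XL \<union> c ` (S - XL)" by (subst Sdec) (rule image_Un)
  have dj: "c ` XL \<inter> c ` (S - XL) = {}"
  proof (rule ccontr)
    assume "c ` XL \<inter> c ` (S - XL) \<noteq> {}"
    then obtain a b where ab: "a \<in> XL" "b \<in> S - XL" "c a = c b" by blast
    hence "(a,b) \<in> N" using c_eq by blast
    moreover have "a \<noteq> b" using ab by blast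
    ultimately show False using N_XL ab by blast
  qed
  have c2: "card (c ` (S - XL)) = card (S - XL)"
    by (rule card_image, rule inj_on_subset[OF c_inj]) (use SV in blast)
  have finXL: "finite XL" using finS XLS finite_subset by blast
  have "card (c ` S) = card (c ` XL) + card (c ` (S - XL))"
    unfolding img by (rule card_Un_disjoint) (use finXL finS dj in auto)
  moreover have "card S = card XL + card (S - XL)"
    using card_Un_disjoint[OF finXL, of "S - XL"] finS Sdec by auto
  ultimately show ?thesis using c2 card_cXL by simp
qed

lemma N_sub_H: "XL \<subseteq> S \<Longrightarrow> N \<subseteq> (rel (induced_edges E S))\<^sup>*"
  unfolding N_def
  apply (rule rtrancl_mono)
  using F2sub unfolding rel_def induced_edges_def by auto

lemma fwd:
  assumes XLS: "XL \<subseteq> S" and SV: "S \<subseteq> V" and SR: "S \<inter> XR = {}"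
    and p: "(x,y) \<in> (rel (induced_edges E S))\<^sup>*"
  shows "(c x, c y) \<in> (rel (induced_edges E' (c ` S)))\<^sup>*"
  using p
proof (induction rule: rtrancl_induct)
  case base then show ?case by simp
next
  case (step y z)
  have yz: "{y,z} \<in> E" "y \<in> S" "z \<in> S" using step(2) unfolding rel_def induced_edges_def by auto
  have "(c y, c z) \<in> (rel (induced_edges E' (c ` S)))\<^sup>*"
  proof (cases "c y = c z")
    case True then show ?thesis by simp
  next
    case False
    have nF1: "{y,z} \<notin> F1"
    proof
      assume "{y,z} \<in> F1"
      hence "y \<in> XR \<or> z \<in> XR" by (rule F1_R)
      thus False using yz SR by blast
    qed
    have "{c y, c z} \<in> E'" using E'_I[OF _ _ False yz(1) nF1] yz SV by blast
    moreover have "{c y, c z} \<subseteq> c ` S" using yz by blast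
    ultimately have "{c y, c z} \<in> induced_edges E' (c ` S)" by (simp add: induced_edges_def)
    hence "(c y, c z) \<in> rel (induced_edges E' (c ` S))" by (simp add: rel_def)
    thus ?thesis by (rule r_into_rtrancl)
  qed
  thus ?case using step(3) by (rule rtrancl_trans[rotated])
qed

lemma bwd:
  assumes XLS: "XL \<subseteq> S" and SV: "S \<subseteq> V"
    and p: "(C,D) \<in> (rel (induced_edges E' (c ` S)))\<^sup>*"
  shows "x \<in> S \<Longrightarrow> y \<in> S \<Longrightarrow> c x = C \<Longrightarrow> c y = D \<Longrightarrow> (x,y) \<in> (rel (induced_edges E S))\<^sup>*"
  using p
proof (induction arbitrary: y rule: rtrancl_induct)
  case base
  hence "(x,y) \<in> N" using c_eq by metis
  thus ?case using N_sub_H[OF XLS] by blast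
next
  case (step D D')
  have DD: "{D,D'} \<in> E'" "D \<in> c ` S" "D' \<in> c ` S" using step(2) unfolding rel_def induced_edges_def by auto
  obtain C0 D0 u v where e: "{D,D'} = {C0,D0}" "C0 \<in> c ` V" "D0 \<in> c ` V" "u \<in> C0" "v \<in> D0"
     "{u,v} \<in> E" by (rule E'_E[OF DD(1)])
  obtain u' v' where uv: "u' \<in> D" "v' \<in> D'" "{u',v'} \<in> E"
  proof (cases "C0 = D")
    case True
    hence "D0 = D'" using e(1) by (auto simp: doubleton_eq_iff)
    thus ?thesis using that e True by blast
  next
    case False
    hence "C0 = D'" "D0 = D" using e(1) by (auto simp: doubleton_eq_iff)
    moreover have "{v,u} \<in> E" using e(6) by (simp add: insert_commute)
    ultimately show ?thesis using that e by blast
  qed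
  obtain s t where st: "s \<in> S" "D = c s" "t \<in> S" "D' = c t" using DD by blast
  have cu: "c u' = D" "c v' = D'" using c_mem_eq uv st by blast+
  have uS: "u' \<in> S" "v' \<in> S" using c_in[of u' s S] c_in[of v' t S] cu st XLS by simp_all
  have "(x,u') \<in> (rel (induced_edges E S))\<^sup>*" by (rule step(3)[OF step(4) uS(1) step(6) cu(1)])
  moreover have "(u',v') \<in> rel (induced_edges E S)" using uv uS by (simp add: rel_def induced_edges_def)
  moreover have "(v',y) \<in> N" using c_eq cu step(7) by metis
  hence "(v',y) \<in> (rel (induced_edges E S))\<^sup>*" using N_sub_H[OF XLS] by blast
  ultimately show ?case by (meson rtrancl_into_rtrancl rtrancl_trans)
qed


lemma rank_eq:
  assumes XLS: "XL \<subseteq> S" and SV: "S \<subseteq> V" and SR: "S \<inter> XR = {}"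
  shows "set_rank E' (c ` S) = set_rank E S - int (card F2)"
proof -
  let ?H = "induced_edges E S" and ?H' = "induced_edges E' (c ` S)"
  have u1: "\<Union>?H \<subseteq> S" unfolding induced_edges_def by blast
  have u2: "\<Union>?H' \<subseteq> c ` S" unfolding induced_edges_def by blast
  have r1: "reach S ?H = (rel ?H)\<^sup>* \<inter> (S \<times> S)" by (rule reach_eq[OF u1])
  have r2: "reach (c ` S) ?H' = (rel ?H')\<^sup>* \<inter> (c ` S \<times> c ` S)" by (rule reach_eq[OF u2])
  have "card (S // reach S ?H) = card (c ` S // reach (c ` S) ?H')"
  proof (rule card_quot_eq[OF refl equiv_reach equiv_reach])
    fix x y assume xy: "x \<in> S" "y \<in> S"
    show "(x, y) \<in> reach S ?H \<longleftrightarrow> (c x, c y) \<in> reach (c ` S) ?H'"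
      unfolding r1 r2 using xy fwd[OF XLS SV SR] bwd[OF XLS SV _ xy refl refl] by blast
  qed
  hence "card (components S ?H) = card (components (c ` S) ?H')" by (simp add: components_def)
  thus ?thesis using card_cS[OF XLS SV] unfolding set_rank_def graph_rank_def by simp
qed


lemma c_eq_nXL: "c a = c b \<Longrightarrow> b \<notin> XL \<Longrightarrow> a = b"
  using c_eq N_XL by blast

lemma core:
  assumes XRs: "XR \<subseteq> Xs" and Xs: "Xs \<subseteq> X - XL" and Ys: "Ys \<subseteq> V - X"
  defines "S \<equiv> (X - Xs) \<union> Ys"
  shows "(c ` X - c ` Xs) \<union> c ` Ys = c ` S"
    and "card (c ` Xs) = card Xs" and "card (c ` Ys) = card Ys"
    and "XL \<subseteq> S" and "S \<subseteq> V" and "S \<inter> XR = {}"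
proof -
  have "c ` X - c ` Xs = c ` (X - Xs)"
  proof (intro set_eqI iffI)
    fix C assume "C \<in> c ` (X - Xs)"
    then obtain x where x: "x \<in> X" "x \<notin> Xs" "C = c x" by blast
    have "C \<notin> c ` Xs"
    proof
      assume "C \<in> c ` Xs"
      then obtain x' where "x' \<in> Xs" "c x = c x'" using x by blast
      thus False using c_eq_nXL Xs x by blast
    qed
    thus "C \<in> c ` X - c ` Xs" using x by blast
  qed blast
  thus "(c ` X - c ` Xs) \<union> c ` Ys = c ` S" unfolding S_def by (simp add: image_Un)
  show "card (c ` Xs) = card Xs"
    by (rule card_image, rule inj_on_subset[OF c_inj]) (use Xs XV in blast)
  show "card (c ` Ys) = card Ys"
    by (rule card_image, rule inj_on_subset[OF c_inj]) (use Ys XLX in blast)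
  show "XL \<subseteq> S" using Xs XLX unfolding S_def by blast
  show "S \<subseteq> V" using Ys XV unfolding S_def by blast
  show "S \<inter> XR = {}" using XRs Ys XRX unfolding S_def by blast
qed

lemma yes_iff:
  "annotated_yes V E k d X XL XR \<longleftrightarrow>
   annotated_yes (c ` V) E' (k - int (card F2)) (d - int (card F2)) (c ` X) (c ` XL) (c ` XR)"
proof
  assume "annotated_yes V E k d X XL XR"
  then obtain Xs Ys where h: "Xs \<subseteq> X" "Ys \<subseteq> V - X" "vertex_cover V E ((X - Xs) \<union> Ys)"
    "set_rank E ((X - Xs) \<union> Ys) \<ge> k" "int (card Ys) - int (card Xs) \<le> k - d"
    "XL \<inter> Xs = {}" "XR \<subseteq> Xs" unfolding annotated_yes_def by blast
  have Xs: "Xs \<subseteq> X - XL" using h by blast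
  note cr = core[OF h(7) Xs h(2)]
  show "annotated_yes (c ` V) E' (k - int (card F2)) (d - int (card F2)) (c ` X) (c ` XL) (c ` XR)"
    unfolding annotated_yes_def
  proof (intro exI conjI)
    show "c ` Xs \<subseteq> c ` X" using h by blast
    show "c ` Ys \<subseteq> c ` V - c ` X"
    proof
      fix C assume "C \<in> c ` Ys"
      then obtain y where y: "y \<in> Ys" "C = c y" by blast
      have "C \<notin> c ` X"
      proof
        assume "C \<in> c ` X"
        then obtain x where "x \<in> X" "c x = c y" using y by blast
        moreover have "y \<notin> XL" using y h(2) XLX by blast
        ultimately show False using c_eq_nXL y h(2) by blast
      qed
      thus "C \<in> c ` V - c ` X" using y h(2) by blast
    qed
    show "vertex_cover (c ` V) E' ((c ` X - c ` Xs) \<union> c ` Ys)"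
      unfolding cr(1) using vc_iff[OF cr(5) cr(4)] h(3) by blast
    show "k - int (card F2) \<le> set_rank E' ((c ` X - c ` Xs) \<union> c ` Ys)"
      unfolding cr(1) rank_eq[OF cr(4) cr(5) cr(6)] using h(4) by simp
    show "int (card (c ` Ys)) - int (card (c ` Xs)) \<le> k - int (card F2) - (d - int (card F2))"
      unfolding cr(2,3) using h(5) by simp
    show "c ` XL \<inter> c ` Xs = {}"
    proof (rule ccontr)
      assume "c ` XL \<inter> c ` Xs \<noteq> {}"
      then obtain l x where "l \<in> XL" "x \<in> Xs" "c l = c x" by blast
      thus False using c_eq_nXL Xs by blast
    qed
    show "c ` XR \<subseteq> c ` Xs" using h(7) by blast
  qed
next
  assume "annotated_yes (c ` V) E' (k - int (card F2)) (d - int (card F2)) (c ` X) (c ` XL) (c ` XR)"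
  then obtain Xs' Ys' where h: "Xs' \<subseteq> c ` X" "Ys' \<subseteq> c ` V - c ` X"
    "vertex_cover (c ` V) E' ((c ` X - Xs') \<union> Ys')"
    "set_rank E' ((c ` X - Xs') \<union> Ys') \<ge> k - int (card F2)"
    "int (card Ys') - int (card Xs') \<le> k - int (card F2) - (d - int (card F2))"
    "c ` XL \<inter> Xs' = {}" "c ` XR \<subseteq> Xs'" unfolding annotated_yes_def by (elim exE conjE) blast
  define Xs where "Xs = {x\<in>X. c x \<in> Xs'}"
  define Ys where "Ys = {y\<in>V - X. c y \<in> Ys'}"
  have XsE: "Xs' = c ` Xs"
  proof (intro set_eqI iffI)
    fix C assume "C \<in> Xs'"
    moreover then obtain x where "x \<in> X" "C = c x" using h(1) by blast
    ultimately show "C \<in> c ` Xs" unfolding Xs_def by blast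
  qed (auto simp: Xs_def)
  have YsE: "Ys' = c ` Ys"
  proof (intro set_eqI iffI)
    fix C assume C: "C \<in> Ys'"
    then obtain y where y: "y \<in> V" "C = c y" using h(2) by blast
    have "y \<notin> X" using C y h(2) by blast
    thus "C \<in> c ` Ys" using C y unfolding Ys_def by blast
  qed (auto simp: Ys_def)
  have XRs: "XR \<subseteq> Xs"
  proof
    fix x assume x: "x \<in> XR"
    hence "c x \<in> Xs'" using h(7) by blast
    thus "x \<in> Xs" using x XRX unfolding Xs_def by blast
  qed
  have Xs: "Xs \<subseteq> X - XL"
  proof
    fix x assume x: "x \<in> Xs"
    hence "x \<in> X" "c x \<in> Xs'" unfolding Xs_def by auto
    moreover have "x \<notin> XL"
    proof
      assume "x \<in> XL"
      hence "c x \<in> c ` XL" by blast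
      thus False using h(6) \<open>c x \<in> Xs'\<close> by blast
    qed
    ultimately show "x \<in> X - XL" by blast
  qed
  have Ys: "Ys \<subseteq> V - X" unfolding Ys_def by blast
  note cr = core[OF XRs Xs Ys]
  show "annotated_yes V E k d X XL XR"
    unfolding annotated_yes_def
  proof (intro exI conjI)
    show "Xs \<subseteq> X" using Xs by blast
    show "Ys \<subseteq> V - X" by (rule Ys)
    show "vertex_cover V E ((X - Xs) \<union> Ys)"
      using vc_iff[OF cr(5) cr(4)] h(3) unfolding XsE YsE cr(1) by blast
    show "k \<le> set_rank E ((X - Xs) \<union> Ys)"
      using h(4) unfolding XsE YsE cr(1) rank_eq[OF cr(4) cr(5) cr(6)] by simp
    show "int (card Ys) - int (card Xs) \<le> k - d"
      using h(5) unfolding XsE YsE cr(2,3) by simp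
    show "XL \<inter> Xs = {}" using Xs by blast
    show "XR \<subseteq> Xs" by (rule XRs)
  qed
qed

end
theorem lemma14:
  fixes V :: "'a set" and E :: "'a set set" and k d :: int
    and X XL XR :: "'a set" and F1 F2 :: "'a set set"
  assumes "simple_graph V E"
    and "vertex_cover V E X"
    and "XL \<subseteq> X" and "XR \<subseteq> X" and "XL \<inter> XR = {}"
    and "independent_set E XR"
    and "\<forall>e\<in>induced_edges E X. e \<subseteq> XL \<union> XR"
    and "F1 = edges_between E XL XR"
    and "spanning_forest XL (induced_edges E XL) F2"
  shows "(annotated_yes V E k d X XL XR \<longleftrightarrow>
           annotated_yes (fst (contract V (E - F1) F2)) (snd (contract V (E - F1) F2))
             (k - int (card F2)) (d - int (card F2))
             (fst (contract X (induced_edges E X) F2))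
             (fst (contract XL (induced_edges E XL) F2))
             (contract_img V F2 ` XR))
         \<and> independent_set (snd (contract V (E - F1) F2)) (fst (contract X (induced_edges E X) F2))"
  proof -
  interpret L V E X XL XR F1 F2 using assms by (simp add: L_def)
  show ?thesis unfolding V'_eq E'_eq X'_eq XL'_eq XR'_eq using yes_iff indep' by blast
qed

end
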